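(* Let $n\ge2$ and let $\Gamma^\delta_{\mathrm{pc}}$ denote the space of smooth, symmetric, past-compact, divergence-free $(0,2)$-tensor fields on $\mathbb{R}^n$. Define on $\Gamma^\delta_{\mathrm{pc}}$ the operators $${P^{(\mathrm S)}}_{ab}{}^{cd}:=\frac{1}{n-1}\tau_{ab}\tau^{cd},\qquad {P^{(\mathrm{TT})}}_{ab}{}^{cd}:=\frac12\big(\tau_a{}^c\tau_b{}^d+\tau_a{}^d\tau_b{}^c\big)-\frac{1}{n-1}\tau_{ab}\tau^{cd},$$ with $\tau_{ab}:=\eta_{ab}-\partial_a\partial_b\mathsf G_{\mathrm{ret}}$. Then for every $\bar h_{ab}\in\Gamma^\delta_{\mathrm{pc}}$, ${P^{(\mathrm S)}}_{ab}{}^{cd}\bar h_{cd}=\bar h^{\mathrm S}_{ab}$ and ${P^{(\mathrm{TT})}}_{ab}{}^{cd}\bar h_{cd}=\bar h^{\mathrm{TT}}_{ab}$ (the scalar and transverse-traceless components of the past-compact decomposition of $\bar h_{ab}$). Moreover, on $\Gamma^\delta_{\mathrm{pc}}$ one has ${P^{(\mathrm S)}}+{P^{(\mathrm{TT})}}=\mathrm{id}$ and ${P^{(\mathrm S)}}{P^{(\mathrm{TT})}}={P^{(\mathrm{TT})}}{P^{(\mathrm S)}}=0$.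
   Context: Minkowski spacetime $(\mathbb{R}^n,\eta)$, $\eta=\mathrm{diag}(-1,1,\dots,1)$, indices moved with $\eta$, $\square=\eta^{ab}\partial_a\partial_b$; past-compact: support meets $J^-(K)$ compactly for all compact $K$; $\mathsf G_{\mathrm{ret}}$: retarded Green operator of $\square$ on past-compact functions (acting componentwise). In the composed expressions, $\tau^{cd}\bar h_{cd}$ means $\eta^{cd}\bar h_{cd}-\mathsf G_{\mathrm{ret}}(\partial^c\partial^d\bar h_{cd})$, etc. Decomposition: every past-compact symmetric $k_{ab}$ with trace $k$ is uniquely $k^{\mathrm S}_{ab}+k^{\mathrm V}_{ab}+k^{\mathrm{TT}}_{ab}$, $k^{\mathrm S}_{ab}=(\partial_a\partial_b-\frac1n\eta_{ab}\square)u+\frac1n\eta_{ab}k$, $k^{\mathrm V}_{ab}=\partial_au_b+\partial_bu_a$, with $u$ past-compact, $u_a$ past-compact divergence-free, $k^{\mathrm{TT}}_{ab}$ past-compact, divergence-free and traceless. *)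

theory Defs
  imports "HOL-Analysis.Analysis"
begin

text \<open>Minkowski spacetime R^n, points are vectors of type (real,'n) vec.
  The index type 'n is finite and well-ordered; its least element is the time index 0.\<close>

type_synonym 'n sfield = "(real,'n) vec \<Rightarrow> real"
type_synonym 'n vfield = "'n \<Rightarrow> (real,'n) vec \<Rightarrow> real"
type_synonym 'n tfield = "'n \<Rightarrow> 'n \<Rightarrow> (real,'n) vec \<Rightarrow> real"

definition time_idx :: "'n::{finite,wellorder}" where
  "time_idx = (LEAST i. True)"

text \<open>Minkowski metric eta = diag(-1,1,...,1); its inverse has the same components.\<close>
definition eta :: "'n::{finite,wellorder} \<Rightarrow> 'n \<Rightarrow> real" where
  "eta a b = (if a = b then (if a = time_idx then -1 else 1) else 0)"

definition mink :: "(real,'n::{finite,wellorder}) vec \<Rightarrow> (real,'n) vec \<Rightarrow> real" where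
  "mink v w = (\<Sum>a\<in>UNIV. \<Sum>b\<in>UNIV. eta a b * v$a * w$b)"

definition pd :: "'n::{finite,wellorder} \<Rightarrow> ((real,'n) vec \<Rightarrow> real) \<Rightarrow> ((real,'n) vec \<Rightarrow> real)" where
  "pd i f = (\<lambda>x. deriv (\<lambda>s. f (x + s *\<^sub>R axis i 1)) 0)"

definition pdu :: "'n::{finite,wellorder} \<Rightarrow> ((real,'n) vec \<Rightarrow> real) \<Rightarrow> ((real,'n) vec \<Rightarrow> real)" where
  "pdu a f = (\<lambda>x. \<Sum>b\<in>UNIV. eta a b * pd b f x)"

definition smooth :: "((real,'n::{finite,wellorder}) vec \<Rightarrow> real) \<Rightarrow> bool" where
  "smooth f \<longleftrightarrow> (\<forall>is. (foldr pd is f) differentiable_on UNIV)"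

definition wave :: "((real,'n::{finite,wellorder}) vec \<Rightarrow> real) \<Rightarrow> ((real,'n) vec \<Rightarrow> real)" where
  "wave f = (\<lambda>x. \<Sum>a\<in>UNIV. \<Sum>b\<in>UNIV. eta a b * pd a (pd b f) x)"

definition causal_fut :: "(real,'n::{finite,wellorder}) vec \<Rightarrow> bool" where
  "causal_fut v \<longleftrightarrow> mink v v \<le> 0 \<and> v $ time_idx \<ge> 0"

definition Jplus :: "((real,'n::{finite,wellorder}) vec) set \<Rightarrow> ((real,'n) vec) set" where
  "Jplus S = {x. \<exists>y\<in>S. causal_fut (x - y)}"

definition Jminus :: "((real,'n::{finite,wellorder}) vec) set \<Rightarrow> ((real,'n) vec) set" where
  "Jminus S = {x. \<exists>y\<in>S. causal_fut (y - x)}"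

definition supp :: "((real,'n::{finite,wellorder}) vec \<Rightarrow> real) \<Rightarrow> ((real,'n) vec) set" where
  "supp f = closure {x. f x \<noteq> 0}"

definition past_compact :: "((real,'n::{finite,wellorder}) vec \<Rightarrow> real) \<Rightarrow> bool" where
  "past_compact f \<longleftrightarrow> (\<forall>K. compact K \<longrightarrow> compact (supp f \<inter> Jminus K))"

definition is_retarded_green ::
  "(((real,'n::{finite,wellorder}) vec \<Rightarrow> real) \<Rightarrow> ((real,'n) vec \<Rightarrow> real)) \<Rightarrow> bool" where
  "is_retarded_green G \<longleftrightarrow>
     (\<forall>f. smooth f \<and> past_compact f \<longrightarrow>
        smooth (G f) \<and> past_compact (G f) \<and> wave (G f) = f \<and> G (wave f) = f
        \<and> supp (G f) \<subseteq> Jplus (supp f))"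

definition smooth_v :: "'n::{finite,wellorder} vfield \<Rightarrow> bool" where
  "smooth_v u \<longleftrightarrow> (\<forall>a. smooth (u a))"
definition pc_v :: "'n::{finite,wellorder} vfield \<Rightarrow> bool" where
  "pc_v u \<longleftrightarrow> (\<forall>a. past_compact (u a))"
definition divfree_v :: "'n::{finite,wellorder} vfield \<Rightarrow> bool" where
  "divfree_v u \<longleftrightarrow> (\<forall>x. (\<Sum>a\<in>UNIV. pdu a (u a) x) = 0)"

definition smooth_t :: "'n::{finite,wellorder} tfield \<Rightarrow> bool" where
  "smooth_t k \<longleftrightarrow> (\<forall>a b. smooth (k a b))"
definition pc_t :: "'n::{finite,wellorder} tfield \<Rightarrow> bool" where
  "pc_t k \<longleftrightarrow> (\<forall>a b. past_compact (k a b))"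
definition sym_t :: "'n::{finite,wellorder} tfield \<Rightarrow> bool" where
  "sym_t k \<longleftrightarrow> (\<forall>a b. k a b = k b a)"
definition divfree_t :: "'n::{finite,wellorder} tfield \<Rightarrow> bool" where
  "divfree_t k \<longleftrightarrow> (\<forall>b x. (\<Sum>a\<in>UNIV. pdu a (k a b) x) = 0)"
definition trace_t :: "'n::{finite,wellorder} tfield \<Rightarrow> ((real,'n) vec \<Rightarrow> real)" where
  "trace_t k = (\<lambda>x. \<Sum>a\<in>UNIV. \<Sum>b\<in>UNIV. eta a b * k a b x)"

definition Gamma_pc :: "'n::{finite,wellorder} tfield set" where
  "Gamma_pc = {k. smooth_t k \<and> sym_t k \<and> pc_t k \<and> divfree_t k}"

definition is_decomp :: "'n::{finite,wellorder} tfield \<Rightarrow> 'n tfield \<Rightarrow> 'n tfield \<Rightarrow> 'n tfield \<Rightarrow> bool" where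
  "is_decomp k kS kV kTT \<longleftrightarrow>
     (\<exists>u. smooth u \<and> past_compact u \<and>
        kS = (\<lambda>a b x. pd a (pd b u) x - eta a b * wave u x / real CARD('n)
                       + eta a b * trace_t k x / real CARD('n))) \<and>
     (\<exists>w. smooth_v w \<and> pc_v w \<and> divfree_v w \<and>
        kV = (\<lambda>a b x. pd a (w b) x + pd b (w a) x)) \<and>
     smooth_t kTT \<and> pc_t kTT \<and> divfree_t kTT \<and> (\<forall>x. trace_t kTT x = 0) \<and>
     (\<forall>a b x. k a b x = kS a b x + kV a b x + kTT a b x)"

definition scalar_part :: "'n::{finite,wellorder} tfield \<Rightarrow> 'n tfield" where
  "scalar_part k = (THE kS. \<exists>kV kTT. is_decomp k kS kV kTT)"
definition TT_part :: "'n::{finite,wellorder} tfield \<Rightarrow> 'n tfield" where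
  "TT_part k = (THE kTT. \<exists>kS kV. is_decomp k kS kV kTT)"

text \<open>tau_{ab} phi = eta_{ab} phi - \<partial>_a \<partial>_b G phi (acting on a scalar).\<close>
definition tau_s :: "(('n::{finite,wellorder} sfield) \<Rightarrow> 'n sfield) \<Rightarrow> 'n sfield \<Rightarrow> 'n tfield" where
  "tau_s G \<phi> = (\<lambda>a b x. eta a b * \<phi> x - pd a (pd b (G \<phi>)) x)"

text \<open>tau^{cd} h_{cd} = eta^{cd} h_{cd} - G(\<partial>^c \<partial>^d h_{cd}).\<close>
definition tau_c :: "(('n::{finite,wellorder} sfield) \<Rightarrow> 'n sfield) \<Rightarrow> 'n tfield \<Rightarrow> 'n sfield" where
  "tau_c G h = (\<lambda>x. (\<Sum>c\<in>UNIV. \<Sum>d\<in>UNIV. eta c d * h c d x)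
                 - G (\<lambda>y. \<Sum>c\<in>UNIV. \<Sum>d\<in>UNIV. pdu c (pdu d (h c d)) y) x)"

text \<open>tau_a^c Y_c = Y_a - \<partial>_a G(\<partial>^c Y_c) (mixed tau acting on one index).\<close>
definition tau_m :: "(('n::{finite,wellorder} sfield) \<Rightarrow> 'n sfield) \<Rightarrow> 'n vfield \<Rightarrow> 'n vfield" where
  "tau_m G Y = (\<lambda>a x. Y a x - pd a (G (\<lambda>y. \<Sum>c\<in>UNIV. pdu c (Y c) y)) x)"

text \<open>tau_a^c tau_b^d h_{cd}.\<close>
definition tau_tau :: "(('n::{finite,wellorder} sfield) \<Rightarrow> 'n sfield) \<Rightarrow> 'n tfield \<Rightarrow> 'n tfield" where
  "tau_tau G h = (\<lambda>a b. tau_m G (\<lambda>c. tau_m G (\<lambda>d. h c d) b) a)"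

definition P_S :: "(('n::{finite,wellorder} sfield) \<Rightarrow> 'n sfield) \<Rightarrow> 'n tfield \<Rightarrow> 'n tfield" where
  "P_S G h = (\<lambda>a b x. tau_s G (tau_c G h) a b x / (real CARD('n) - 1))"

definition P_TT :: "(('n::{finite,wellorder} sfield) \<Rightarrow> 'n sfield) \<Rightarrow> 'n tfield \<Rightarrow> 'n tfield" where
  "P_TT G h = (\<lambda>a b x. (tau_tau G h a b x + tau_tau G (\<lambda>c d. h d c) a b x) / 2
                        - tau_s G (tau_c G h) a b x / (real CARD('n) - 1))"

end

theory Submission
  imports Defs
begin


lemma dir_deriv:
  fixes f :: "(real,'n::{finite,wellorder}) vec \<Rightarrow> real"
  assumes "(f has_derivative f') (at (y + s0 *\<^sub>R e))"
  shows "((\<lambda>s. f (y + s *\<^sub>R e)) has_real_derivative f' e) (at s0)"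
proof -
  have i: "((\<lambda>s. y + s *\<^sub>R e) has_derivative (\<lambda>s. s *\<^sub>R e)) (at s0)"
    by (auto intro!: derivative_eq_intros)
  have "((\<lambda>s. f (y + s *\<^sub>R e)) has_derivative (\<lambda>s. f' (s *\<^sub>R e))) (at s0)"
    using has_derivative_compose[OF i assms] by (simp add: o_def)
  moreover have "linear f'" using assms has_derivative_linear by blast
  ultimately have "((\<lambda>s. f (y + s *\<^sub>R e)) has_derivative (\<lambda>s. s * f' e)) (at s0)"
    by (simp add: linear_scale)
  moreover have "(\<lambda>s. s * f' e) = (*) (f' e)" by (auto simp: mult.commute)
  ultimately show ?thesis by (simp add: has_field_derivative_def)
qed

lemma pd_eq:
  assumes "(f has_derivative f') (at z)"
  shows "pd i f z = f' (axis i 1)"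
proof -
  have "((\<lambda>s. f (z + s *\<^sub>R axis i 1)) has_real_derivative f' (axis i 1)) (at 0)"
    using dir_deriv[of f f' z 0] assms by simp
  then show ?thesis unfolding pd_def by (rule DERIV_imp_deriv)
qed

lemma pd_dir:
  assumes "f differentiable (at (y + s0 *\<^sub>R axis i 1))"
  shows "((\<lambda>s. f (y + s *\<^sub>R axis i 1)) has_real_derivative pd i f (y + s0 *\<^sub>R axis i 1)) (at s0)"
proof -
  obtain f' where f': "(f has_derivative f') (at (y + s0 *\<^sub>R axis i 1))"
    using assms differentiable_def by blast
  show ?thesis using dir_deriv[OF f'] pd_eq[OF f'] by simp
qed

lemma smooth_differentiable: "smooth f \<Longrightarrow> f differentiable (at x)"
  unfolding smooth_def
proof -
  assume "\<forall>is. foldr pd is f differentiable_on UNIV"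
  then have "f differentiable_on UNIV" by (metis foldr.simps(1) id_apply)
  then show ?thesis by (simp add: differentiable_on_def)
qed

lemma smooth_pd[simp]: "smooth f \<Longrightarrow> smooth (pd i f)"
proof -
  assume "smooth f"
  then show ?thesis unfolding smooth_def
  proof (intro allI)
    fix "is"
    assume a: "\<forall>is. foldr pd is f differentiable_on UNIV"
    have "foldr pd is (pd i f) = foldr pd (is @ [i]) f" by simp
    then show "foldr pd is (pd i f) differentiable_on UNIV" using a by metis
  qed
qed

lemma smooth_foldr: "smooth f \<Longrightarrow> smooth (foldr pd is f)"
  by (induction "is") auto

lemma pd_add_at:
  assumes "f differentiable (at z)" "g differentiable (at z)"
  shows "pd i (\<lambda>x. f x + g x) z = pd i f z + pd i g z"
proof -
  obtain f' g' where f': "(f has_derivative f') (at z)" and g': "(g has_derivative g') (at z)"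
    using assms differentiable_def by blast
  have d: "((\<lambda>x. f x + g x) has_derivative (\<lambda>x. f' x + g' x)) (at z)"
    using f' g' by (rule has_derivative_add)
  show ?thesis using pd_eq[OF d, of i] pd_eq[OF f', of i] pd_eq[OF g', of i] by simp
qed

lemma pd_cmult_at:
  assumes "f differentiable (at z)"
  shows "pd i (\<lambda>x. c * f x) z = c * pd i f z"
proof -
  obtain f' where f': "(f has_derivative f') (at z)"
    using assms differentiable_def by blast
  have "((\<lambda>x. c * f x) has_derivative (\<lambda>x. c * f' x)) (at z)"
    using f' by (auto intro!: derivative_eq_intros)
  then show ?thesis using pd_eq[OF f', of i] pd_eq[of "\<lambda>x. c * f x"] by simp
qed

lemma pd_zero[simp]: "pd i (\<lambda>x. 0) = (\<lambda>x. 0)"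
  unfolding pd_def by simp




lemma pd_diff_at:
  assumes "f differentiable (at z)" "g differentiable (at z)"
  shows "pd i (\<lambda>x. f x - g x) z = pd i f z - pd i g z"
proof -
  obtain f' g' where f': "(f has_derivative f') (at z)" and g': "(g has_derivative g') (at z)"
    using assms differentiable_def by blast
  have d: "((\<lambda>x. f x - g x) has_derivative (\<lambda>x. f' x - g' x)) (at z)"
    using f' g' by (rule has_derivative_diff)
  show ?thesis using pd_eq[OF d, of i] pd_eq[OF f', of i] pd_eq[OF g', of i] by simp
qed

lemma pd_sum_at:
  assumes "finite S" "\<And>j. j \<in> S \<Longrightarrow> f j differentiable (at z)"
  shows "pd i (\<lambda>x. \<Sum>j\<in>S. f j x) z = (\<Sum>j\<in>S. pd i (f j) z)"
proof -
  have "\<forall>j\<in>S. \<exists>f'. (f j has_derivative f') (at z)"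
    using assms differentiable_def by blast
  then obtain F where F: "\<And>j. j \<in> S \<Longrightarrow> (f j has_derivative F j) (at z)" by metis
  have d: "((\<lambda>x. \<Sum>j\<in>S. f j x) has_derivative (\<lambda>x. \<Sum>j\<in>S. F j x)) (at z)"
    using F by (rule has_derivative_sum)
  show ?thesis using pd_eq[OF d, of i] pd_eq[OF F, of _ i] by simp
qed

lemma smooth_zero[simp]: "smooth (\<lambda>x::(real,'n::{finite,wellorder}) vec. 0::real)"
proof -
  have "foldr pd is (\<lambda>x::(real,'n) vec. 0::real) = (\<lambda>x. 0)" for "is" by (induction "is") auto
  moreover have "(\<lambda>x::(real,'n) vec. 0::real) differentiable_on UNIV"
    by (simp add: differentiable_on_const)
  ultimately show ?thesis unfolding smooth_def by metis
qed

lemma smooth_add[simp]: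
  assumes "smooth f" "smooth g" shows "smooth (\<lambda>x. f x + g x)"
proof -
  have "foldr pd is (\<lambda>x. f x + g x) = (\<lambda>x. foldr pd is f x + foldr pd is g x)" for "is"
    by (induction "is") (auto simp: pd_add_at smooth_differentiable smooth_foldr assms)
  then show ?thesis using assms unfolding smooth_def
    by (simp add: differentiable_on_def differentiable_add)
qed

lemma smooth_diff[simp]:
  assumes "smooth f" "smooth g" shows "smooth (\<lambda>x. f x - g x)"
proof -
  have "foldr pd is (\<lambda>x. f x - g x) = (\<lambda>x. foldr pd is f x - foldr pd is g x)" for "is"
    by (induction "is") (auto simp: pd_diff_at smooth_differentiable smooth_foldr assms)
  then show ?thesis using assms unfolding smooth_def
    by (simp add: differentiable_on_def differentiable_diff)
qed

lemma smooth_cmult[simp]: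
  assumes "smooth f" shows "smooth (\<lambda>x. c * f x)"
proof -
  have "foldr pd is (\<lambda>x. c * f x) = (\<lambda>x. c * foldr pd is f x)" for "is"
    by (induction "is") (auto simp: pd_cmult_at smooth_differentiable smooth_foldr assms)
  then show ?thesis using assms unfolding smooth_def
    by (simp add: differentiable_on_def differentiable_cmult_left_iff)
qed

lemma smooth_divide[simp]:
  assumes "smooth f" shows "smooth (\<lambda>x. f x / c)"
  using smooth_cmult[OF assms, of "inverse c"] by (simp add: divide_inverse mult.commute)

lemma smooth_sum[simp]:
  assumes "\<And>j. j \<in> S \<Longrightarrow> smooth (f j)" shows "smooth (\<lambda>x. \<Sum>j\<in>S. f j x)"
  using assms
proof (induction S rule: infinite_finite_induct)
  case (insert j S) then show ?case
    using smooth_add[of "f j" "\<lambda>x. \<Sum>j\<in>S. f j x"] by simp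
qed auto

lemma pd_add: "smooth f \<Longrightarrow> smooth g \<Longrightarrow> pd i (\<lambda>x. f x + g x) = (\<lambda>x. pd i f x + pd i g x)"
  by (auto simp: pd_add_at smooth_differentiable)
lemma pd_diff: "smooth f \<Longrightarrow> smooth g \<Longrightarrow> pd i (\<lambda>x. f x - g x) = (\<lambda>x. pd i f x - pd i g x)"
  by (auto simp: pd_diff_at smooth_differentiable)
lemma pd_cmult: "smooth f \<Longrightarrow> pd i (\<lambda>x. c * f x) = (\<lambda>x. c * pd i f x)"
  by (auto simp: pd_cmult_at smooth_differentiable)
lemma pd_divide: "smooth f \<Longrightarrow> pd i (\<lambda>x. f x / c) = (\<lambda>x. pd i f x / c)"
  using pd_cmult[of f i "inverse c"] by (simp add: divide_inverse mult.commute)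
lemma pd_sum: "finite S \<Longrightarrow> (\<And>j. j \<in> S \<Longrightarrow> smooth (f j)) \<Longrightarrow>
   pd i (\<lambda>x. \<Sum>j\<in>S. f j x) = (\<lambda>x. \<Sum>j\<in>S. pd i (f j) x)"
  by (auto simp: pd_sum_at smooth_differentiable)




lemma pd_shift: "pd i (\<lambda>z. f (z + c)) = (\<lambda>z. pd i f (z + c))"
  unfolding pd_def by (simp add: algebra_simps)

lemma smooth_shift[simp]:
  assumes "smooth f" shows "smooth (\<lambda>z. f (z + c))"
proof -
  have eq: "foldr pd is (\<lambda>z. f (z + c)) = (\<lambda>z. foldr pd is f (z + c))" for "is"
    by (induction "is") (auto simp: pd_shift)
  have "(\<lambda>z. g (z + c)) differentiable_on UNIV" if "g differentiable_on UNIV" for g :: "(real,'a) vec \<Rightarrow> real"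
  proof -
    have "(g \<circ> (\<lambda>z. z + c)) differentiable (at z)" for z
      using that by (intro differentiable_chain_at) (auto simp: differentiable_on_def)
    then show ?thesis by (simp add: differentiable_on_def o_def)
  qed
  then show ?thesis using assms unfolding smooth_def eq by blast
qed

lemma mvt_dir:
  assumes "smooth g" "0 < h"
  shows "\<exists>s. 0 < s \<and> s < h \<and> g (y + h *\<^sub>R axis i 1) - g y = h * pd i g (y + s *\<^sub>R axis i 1)"
proof -
  have "\<And>s. DERIV (\<lambda>s. g (y + s *\<^sub>R axis i 1)) s :> pd i g (y + s *\<^sub>R axis i 1)"
    by (rule pd_dir) (simp add: smooth_differentiable assms)
  from MVT2[OF assms(2) this] show ?thesis by auto
qed

lemma mixed:
  assumes "smooth f" "0 < h"
  shows "\<exists>s t. 0 < s \<and> s < h \<and> 0 < t \<and> t < h \<and>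
    f (x + h *\<^sub>R axis a 1 + h *\<^sub>R axis b 1) - f (x + h *\<^sub>R axis a 1) - f (x + h *\<^sub>R axis b 1) + f x
     = h * h * pd b (pd a f) (x + s *\<^sub>R axis a 1 + t *\<^sub>R axis b 1)"
proof -
  define g where "g = (\<lambda>z. f (z + h *\<^sub>R axis b 1) - f z)"
  have sg: "smooth g" unfolding g_def using assms by simp
  obtain s where s: "0 < s" "s < h" "g (x + h *\<^sub>R axis a 1) - g x = h * pd a g (x + s *\<^sub>R axis a 1)"
    using mvt_dir[OF sg assms(2)] by blast
  have pg: "pd a g = (\<lambda>z. pd a f (z + h *\<^sub>R axis b 1) - pd a f z)"
    unfolding g_def using assms by (simp add: pd_diff pd_shift)
  obtain t where t: "0 < t" "t < h" "pd a f (x + s *\<^sub>R axis a 1 + h *\<^sub>R axis b 1) - pd a f (x + s *\<^sub>R axis a 1)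
     = h * pd b (pd a f) (x + s *\<^sub>R axis a 1 + t *\<^sub>R axis b 1)"
    using mvt_dir[OF smooth_pd[OF assms(1)] assms(2)] by blast
  show ?thesis
    apply (rule exI[of _ s], rule exI[of _ t])
    using s t pg unfolding g_def by (simp add: algebra_simps)
qed

lemma schwarz_pt:
  assumes "smooth f"
  shows "pd a (pd b f) x = pd b (pd a f) x"
proof (rule ccontr)
  assume ne: "pd a (pd b f) x \<noteq> pd b (pd a f) x"
  define d where "d = \<bar>pd a (pd b f) x - pd b (pd a f) x\<bar>"
  have d: "d > 0" using ne unfolding d_def by simp
  have c1: "isCont (pd b (pd a f)) x" and c2: "isCont (pd a (pd b f)) x"
    using assms by (auto intro!: differentiable_imp_continuous_within smooth_differentiable)
  obtain r1 where r1: "r1 > 0" "\<And>z. dist z x < r1 \<Longrightarrow> dist (pd b (pd a f) z) (pd b (pd a f) x) < d/2"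
    using c1 d unfolding continuous_at_eps_delta by (metis half_gt_zero)
  obtain r2 where r2: "r2 > 0" "\<And>z. dist z x < r2 \<Longrightarrow> dist (pd a (pd b f) z) (pd a (pd b f) x) < d/2"
    using c2 d unfolding continuous_at_eps_delta by (metis half_gt_zero)
  define h where "h = min r1 r2 / 3"
  have h: "h > 0" "2 * h < r1" "2 * h < r2" using r1 r2 unfolding h_def by auto
  obtain s t where st: "0 < s" "s < h" "0 < t" "t < h"
    "f (x + h *\<^sub>R axis a 1 + h *\<^sub>R axis b 1) - f (x + h *\<^sub>R axis a 1) - f (x + h *\<^sub>R axis b 1) + f x
     = h * h * pd b (pd a f) (x + s *\<^sub>R axis a 1 + t *\<^sub>R axis b 1)"
    using mixed[OF assms h(1)] by blast
  obtain s' t' where st': "0 < s'" "s' < h" "0 < t'" "t' < h"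
    "f (x + h *\<^sub>R axis b 1 + h *\<^sub>R axis a 1) - f (x + h *\<^sub>R axis b 1) - f (x + h *\<^sub>R axis a 1) + f x
     = h * h * pd a (pd b f) (x + s' *\<^sub>R axis b 1 + t' *\<^sub>R axis a 1)"
    using mixed[OF assms h(1)] by blast
  define p1 where "p1 = x + s *\<^sub>R axis a 1 + t *\<^sub>R axis b 1"
  define p2 where "p2 = x + s' *\<^sub>R axis b 1 + t' *\<^sub>R axis a 1"
  have "x + h *\<^sub>R axis b 1 + h *\<^sub>R axis a 1 = x + h *\<^sub>R axis a 1 + h *\<^sub>R axis b 1"
    by (simp add: algebra_simps)
  then have eq: "pd b (pd a f) p1 = pd a (pd b f) p2"
    using st(5) st'(5) h(1) unfolding p1_def p2_def by (simp add: algebra_simps)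
  have n1: "dist p1 x < r1"
  proof -
    have "dist p1 x = norm (s *\<^sub>R axis a 1 + t *\<^sub>R axis b (1::real))"
      unfolding p1_def dist_norm by (simp add: algebra_simps)
    also have "\<dots> \<le> norm (s *\<^sub>R axis a (1::real)) + norm (t *\<^sub>R axis b (1::real))" by (rule norm_triangle_ineq)
    also have "\<dots> = s + t" using st by simp
    finally show ?thesis using st h by simp
  qed
  have n2: "dist p2 x < r2"
  proof -
    have "dist p2 x = norm (s' *\<^sub>R axis b 1 + t' *\<^sub>R axis a (1::real))"
      unfolding p2_def dist_norm by (simp add: algebra_simps)
    also have "\<dots> \<le> norm (s' *\<^sub>R axis b (1::real)) + norm (t' *\<^sub>R axis a (1::real))" by (rule norm_triangle_ineq)
    also have "\<dots> = s' + t'" using st' by simp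
    finally show ?thesis using st' h by simp
  qed
  have "dist (pd b (pd a f) p1) (pd b (pd a f) x) < d/2" using r1(2)[OF n1] .
  moreover have "dist (pd a (pd b f) p2) (pd a (pd b f) x) < d/2" using r2(2)[OF n2] .
  moreover have "\<And>P Q X Y::real. \<bar>P - Y\<bar> < \<bar>X - Y\<bar> / 2 \<Longrightarrow> \<bar>Q - X\<bar> < \<bar>X - Y\<bar> / 2 \<Longrightarrow> P = Q \<Longrightarrow> False"
    by (simp add: abs_if split: if_splits)
  ultimately show False using eq unfolding d_def dist_real_def by blast
qed

lemma schwarz: "smooth f \<Longrightarrow> pd a (pd b f) = pd b (pd a f)"
  using schwarz_pt by blast




lemma out_supp: "x \<notin> supp f \<Longrightarrow> f x = 0"
  unfolding supp_def using closure_subset[of "{x. f x \<noteq> 0}"] by auto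

lemma supp_le: "(\<And>x. x \<notin> supp f \<Longrightarrow> g x = 0) \<Longrightarrow> supp g \<subseteq> supp f"
  unfolding supp_def by (rule closure_minimal) auto

lemma pd_out: assumes "x \<notin> supp f" shows "pd i f x = 0"
proof -
  define U where "U = - supp f"
  have U: "open U" "x \<in> U" unfolding U_def supp_def using assms supp_def by auto
  have fz: "\<And>y. y \<in> U \<Longrightarrow> f y = 0" unfolding U_def using out_supp by blast
  define S where "S = {s::real. x + s *\<^sub>R axis i 1 \<in> U}"
  have "continuous_on UNIV (\<lambda>s::real. x + s *\<^sub>R axis i (1::real))"
    by (intro continuous_intros)
  then have oS: "open S" unfolding S_def using U(1) open_vimage[of U "\<lambda>s::real. x + s *\<^sub>R axis i (1::real)"]
    by (simp add: vimage_def)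
  have "0 \<in> S" unfolding S_def using U by simp
  have "((\<lambda>s. f (x + s *\<^sub>R axis i 1)) has_real_derivative 0) (at 0)"
    by (rule has_field_derivative_transform_within_open[of "\<lambda>s. 0" 0 0 S])
       (use oS \<open>0 \<in> S\<close> fz in \<open>auto simp: S_def\<close>)
  then show ?thesis unfolding pd_def by (rule DERIV_imp_deriv)
qed

lemma supp_pd: "supp (pd i f) \<subseteq> supp f"
  by (rule supp_le) (rule pd_out)

lemma pd_out2: "x \<notin> supp f \<Longrightarrow> pd i (pd j f) x = 0"
  using supp_pd pd_out by blast

lemma pc_le:
  assumes "past_compact f" "supp g \<subseteq> supp f" shows "past_compact g"
  unfolding past_compact_def
proof (intro allI impI)
  fix K :: "(real,'a) vec set" assume "compact K"
  then have c: "compact (supp f \<inter> Jminus K)" using assms(1) past_compact_def by blast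
  have "supp g \<inter> Jminus K = supp g \<inter> (supp f \<inter> Jminus K)" using assms(2) by blast
  moreover have "closed (supp g)" unfolding supp_def by simp
  ultimately show "compact (supp g \<inter> Jminus K)" using c closed_Int_compact by metis
qed

lemma pc_le2:
  assumes "past_compact f1" "past_compact f2" "supp g \<subseteq> supp f1 \<union> supp f2" shows "past_compact g"
  unfolding past_compact_def
proof (intro allI impI)
  fix K :: "(real,'a) vec set" assume "compact K"
  then have c: "compact ((supp f1 \<inter> Jminus K) \<union> (supp f2 \<inter> Jminus K))"
    using assms(1,2) past_compact_def by blast
  have "supp g \<inter> Jminus K = supp g \<inter> ((supp f1 \<inter> Jminus K) \<union> (supp f2 \<inter> Jminus K))" using assms(3) by blast
  moreover have "closed (supp g)" unfolding supp_def by simp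
  ultimately show "compact (supp g \<inter> Jminus K)" using c closed_Int_compact by metis
qed

lemma supp_zero[simp]: "supp (\<lambda>x. 0) = {}" unfolding supp_def by simp

lemma pc_zero[simp]: "past_compact (\<lambda>x. 0)" unfolding past_compact_def by simp

lemma supp_le2: "(\<And>x. g x \<noteq> 0 \<Longrightarrow> f1 x \<noteq> 0 \<or> f2 x \<noteq> 0) \<Longrightarrow> supp g \<subseteq> supp f1 \<union> supp f2"
  unfolding supp_def closure_Un[symmetric] by (rule closure_mono) auto

lemma pc_add[simp]: "past_compact f \<Longrightarrow> past_compact g \<Longrightarrow> past_compact (\<lambda>x. f x + g x)"
  by (erule pc_le2[of f g], assumption) (rule supp_le2, auto)
lemma pc_diff[simp]: "past_compact f \<Longrightarrow> past_compact g \<Longrightarrow> past_compact (\<lambda>x. f x - g x)"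
  by (erule pc_le2[of f g], assumption) (rule supp_le2, auto)
lemma pc_cmult[simp]: "past_compact f \<Longrightarrow> past_compact (\<lambda>x. c * f x)"
  by (rule pc_le[of f]) (auto intro!: supp_le simp: out_supp)
lemma pc_divide[simp]: "past_compact f \<Longrightarrow> past_compact (\<lambda>x. f x / c)"
  by (rule pc_le[of f]) (auto intro!: supp_le simp: out_supp)
lemma pc_pd[simp]: "past_compact f \<Longrightarrow> past_compact (pd i f)"
  by (metis pc_le supp_pd)
lemma pc_sum[simp]: "(\<And>j. j \<in> S \<Longrightarrow> past_compact (f j)) \<Longrightarrow> past_compact (\<lambda>x. \<Sum>j\<in>S. f j x)"
proof (induction S rule: infinite_finite_induct)
  case (insert j S) then show ?case
    using pc_add[of "f j" "\<lambda>x. \<Sum>j\<in>S. f j x"] by simp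
qed auto

lemma pc_wave[simp]: "past_compact f \<Longrightarrow> past_compact (wave f)"
  unfolding wave_def by simp
lemma smooth_wave[simp]: "smooth f \<Longrightarrow> smooth (wave f)"
  unfolding wave_def by simp

lemma eta_off: "a \<noteq> b \<Longrightarrow> eta a b = 0" unfolding eta_def by simp
lemma eta_sym: "eta a b = eta b a" unfolding eta_def by auto
lemma eta_sq[simp]: "eta a a * eta a a = 1" unfolding eta_def by auto
lemma eta_sum_l[simp]: "(\<Sum>b\<in>UNIV. eta a b * X b) = eta a a * X a"
  by (subst sum.remove[of _ a]) (auto simp: eta_off)
lemma eta_sum_r[simp]: "(\<Sum>b\<in>UNIV. eta b a * X b) = eta a a * X a"
  by (subst sum.remove[of _ a]) (auto simp: eta_off)
lemma eta_sum_lm[simp]: "(\<Sum>b\<in>UNIV. eta a b * Y * X b) = eta a a * Y * X a"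
  by (subst sum.remove[of _ a]) (auto simp: eta_off)
lemma eta_sq_sum: "(\<Sum>a\<in>UNIV. eta (a::'n) a * eta a a) = real CARD('n::{finite,wellorder})"
  by simp

lemma pdu_eq: "pdu a f = (\<lambda>x. eta a a * pd a f x)"
  unfolding pdu_def by simp
lemma wave_eq: "wave f = (\<lambda>x. \<Sum>a\<in>UNIV. eta a a * pd a (pd a f) x)"
  unfolding wave_def by simp
lemma trace_eq: "trace_t k = (\<lambda>x. \<Sum>a\<in>UNIV. eta a a * k a a x)"
  unfolding trace_t_def by simp

lemma wave_zero[simp]: "wave (\<lambda>x. 0) = (\<lambda>x. 0)"
  unfolding wave_def by simp

context
  fixes G :: "((real,'n::{finite,wellorder}) vec \<Rightarrow> real) \<Rightarrow> ((real,'n) vec \<Rightarrow> real)"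
  assumes G: "is_retarded_green G"
begin

lemma G_smooth[simp]: "smooth f \<Longrightarrow> past_compact f \<Longrightarrow> smooth (G f)"
  using G unfolding is_retarded_green_def by blast
lemma G_pc[simp]: "smooth f \<Longrightarrow> past_compact f \<Longrightarrow> past_compact (G f)"
  using G unfolding is_retarded_green_def by blast
lemma G_wave1[simp]: "smooth f \<Longrightarrow> past_compact f \<Longrightarrow> wave (G f) = f"
  using G unfolding is_retarded_green_def by blast
lemma G_wave2: "smooth f \<Longrightarrow> past_compact f \<Longrightarrow> G (wave f) = f"
  using G unfolding is_retarded_green_def by blast
lemma G_zero[simp]: "G (\<lambda>x. 0) = (\<lambda>x. 0)"
  using G_wave2[of "\<lambda>x. 0"] by simp
lemma wave_unique: fixes u :: "(real,'n) vec \<Rightarrow> real" shows "smooth u \<Longrightarrow> past_compact u \<Longrightarrow> wave u = (\<lambda>x. 0) \<Longrightarrow> u = (\<lambda>x. 0)"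
  using G_wave2[of u] by simp
lemma G_eqI: fixes u :: "(real,'n) vec \<Rightarrow> real" shows "smooth u \<Longrightarrow> past_compact u \<Longrightarrow> wave u = f \<Longrightarrow> G f = u"
  using G_wave2[of u] by simp

end




lemma wave_cmult: "smooth f \<Longrightarrow> wave (\<lambda>x. c * f x) = (\<lambda>x. c * wave f x)"
  by (simp add: wave_eq pd_cmult sum_distrib_left algebra_simps)

lemma wave_pd: "smooth g \<Longrightarrow> pd b (wave g) = (\<lambda>x. \<Sum>a\<in>UNIV. eta a a * pd a (pd a (pd b g)) x)"
proof -
  assume g: "smooth g"
  have "pd a (pd a (pd b g)) = pd b (pd a (pd a g))" for a
    using schwarz[OF g, of a b] schwarz[OF smooth_pd[OF g, of a], of a b] by simp
  then show ?thesis using g by (simp add: wave_eq pd_sum pd_cmult)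
qed

lemma wave_pd': "smooth g \<Longrightarrow> wave (pd b g) = pd b (wave g)"
proof -
  assume g: "smooth g"
  then show ?thesis using wave_pd[OF g] by (simp add: wave_eq)
qed

lemma Gamma_smooth[simp]: "h \<in> Gamma_pc \<Longrightarrow> smooth (h a b)"
  unfolding Gamma_pc_def smooth_t_def by blast
lemma Gamma_pc[simp]: "h \<in> Gamma_pc \<Longrightarrow> past_compact (h a b)"
  unfolding Gamma_pc_def pc_t_def by blast
lemma Gamma_sym: "h \<in> Gamma_pc \<Longrightarrow> h a b = h b a"
  unfolding Gamma_pc_def sym_t_def by blast
lemma Gamma_div1: "h \<in> Gamma_pc \<Longrightarrow> (\<Sum>a\<in>UNIV. eta a a * pd a (h a b) x) = 0"
  unfolding Gamma_pc_def divfree_t_def by (simp add: pdu_eq)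
lemma Gamma_div2: "h \<in> Gamma_pc \<Longrightarrow> (\<Sum>a\<in>UNIV. eta a a * pd a (h b a) x) = 0"
  using Gamma_div1[of h b x] Gamma_sym[of h] by simp
lemma Gamma_div1f: "h \<in> Gamma_pc \<Longrightarrow> (\<lambda>x. \<Sum>a\<in>UNIV. eta a a * pd a (h a b) x) = (\<lambda>x. 0)"
  using Gamma_div1 by blast
lemma Gamma_div2f: "h \<in> Gamma_pc \<Longrightarrow> (\<lambda>x. \<Sum>a\<in>UNIV. eta a a * pd a (h b a) x) = (\<lambda>x. 0)"
  using Gamma_div2 by blast

lemma trace_smooth[simp]: "h \<in> Gamma_pc \<Longrightarrow> smooth (trace_t h)"
  by (simp add: trace_eq)
lemma trace_pc[simp]: "h \<in> Gamma_pc \<Longrightarrow> past_compact (trace_t h)"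
  by (simp add: trace_eq)

lemma Gamma_diff:
  assumes "h \<in> Gamma_pc" "k \<in> Gamma_pc"
  shows "(\<lambda>a b x. h a b x - k a b x) \<in> Gamma_pc"
proof -
  have "divfree_t (\<lambda>a b x. h a b x - k a b x)"
    unfolding divfree_t_def pdu_eq using assms
    by (simp add: pd_diff right_diff_distrib sum_subtractf Gamma_div1)
  moreover have "sym_t (\<lambda>a b x. h a b x - k a b x)"
    unfolding sym_t_def using assms Gamma_sym by metis
  ultimately show ?thesis using assms unfolding Gamma_pc_def smooth_t_def pc_t_def
    by simp
qed

lemma trace_diff: "trace_t (\<lambda>a b x. h a b x - k a b x) = (\<lambda>x. trace_t h x - trace_t k x)"
  by (simp add: trace_eq right_diff_distrib sum_subtractf)

context
  fixes G :: "((real,'n::{finite,wellorder}) vec \<Rightarrow> real) \<Rightarrow> ((real,'n) vec \<Rightarrow> real)"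
  assumes G: "is_retarded_green G" and n2: "CARD('n) \<ge> 2"
begin

lemmas Gsimps[simp] = G_smooth[OF G] G_pc[OF G] G_wave1[OF G] G_zero[OF G]

definition PS0 :: "'n sfield \<Rightarrow> 'n tfield" where
  "PS0 \<phi> = (\<lambda>a b x. (eta a b * \<phi> x - pd a (pd b (G \<phi>)) x) / (real CARD('n) - 1))"

lemma tau_c_div: "h \<in> Gamma_pc \<Longrightarrow> tau_c G h = trace_t h"
proof -
  assume h: "h \<in> Gamma_pc"
  have "(\<Sum>c\<in>UNIV. \<Sum>d\<in>UNIV. pdu c (pdu d (h c d)) y) = 0" for y
  proof -
    have "(\<Sum>d\<in>UNIV. pdu c (pdu d (h c d)) y) = eta c c * pd c (\<lambda>x. \<Sum>d\<in>UNIV. eta d d * pd d (h c d) x) y" for c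
      using h by (simp add: pdu_eq pd_cmult pd_sum sum_distrib_left algebra_simps)
    then show ?thesis using h by (simp add: Gamma_div2f)
  qed
  then show ?thesis unfolding tau_c_def trace_t_def by simp
qed

lemma tau_tau_id: "h \<in> Gamma_pc \<Longrightarrow> tau_tau G h = h"
proof -
  assume h: "h \<in> Gamma_pc"
  have i: "(\<lambda>c. tau_m G (\<lambda>d. h c d) b) = (\<lambda>c. h c b)" for b
    unfolding tau_m_def pdu_eq using h by (simp add: Gamma_div2f)
  show ?thesis unfolding tau_tau_def i
    unfolding tau_m_def pdu_eq using h by (simp add: Gamma_div1f)
qed

lemma P_S_eq: "h \<in> Gamma_pc \<Longrightarrow> P_S G h = PS0 (trace_t h)"
  unfolding P_S_def PS0_def tau_s_def by (simp add: tau_c_div)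

lemma P_TT_eq: "h \<in> Gamma_pc \<Longrightarrow> P_TT G h = (\<lambda>a b x. h a b x - PS0 (trace_t h) a b x)"
proof -
  assume h: "h \<in> Gamma_pc"
  have e: "(\<lambda>c d. h d c) = h" using Gamma_sym[OF h] by (intro ext) metis
  have t1: "tau_tau G (\<lambda>c d. h d c) = h" unfolding e by (rule tau_tau_id[OF h])
  show ?thesis unfolding P_TT_def PS0_def tau_s_def t1 tau_tau_id[OF h] tau_c_div[OF h] by simp
qed

end



lemma wave_sum: fixes f :: "'n::{finite,wellorder} \<Rightarrow> (real,'n) vec \<Rightarrow> real" shows "(\<And>j. smooth (f j)) \<Longrightarrow> wave (\<lambda>x. \<Sum>j\<in>UNIV. f j x) = (\<lambda>x. \<Sum>j\<in>UNIV. wave (f j) x)"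
  by (simp add: wave_eq pd_sum sum_distrib_left) (rule ext, rule sum.swap)

lemma eta_sum_rd: "(\<Sum>b\<in>UNIV. eta b a * X b / N) = eta a a * X a / (N::real)"
  using eta_sum_r[of a "\<lambda>b. X b / N"] by simp

lemma alg1D: "(D::real) \<noteq> 0 \<Longrightarrow> D + 1 \<noteq> 0 \<Longrightarrow>
   (e*t - P)/D = (-1/D)*P - e*((-1/D)*t)/(D+1) + e*t/(D+1)"
  by (simp add: divide_simps) (simp add: algebra_simps)
lemma alg2D: "(D::real) \<noteq> 0 \<Longrightarrow> D + 1 \<noteq> 0 \<Longrightarrow>
   P - e * (- t / D) / (D+1) + e * t / (D+1) = (e * t - (- D) * P) / D"
  by (simp add: divide_simps) (simp add: algebra_simps)
lemma alg1: "(N::real) \<noteq> 0 \<Longrightarrow> N - 1 \<noteq> 0 \<Longrightarrow>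
   (e*t - P)/(N-1) = (-1/(N-1))*P - e*((-1/(N-1))*t)/N + e*t/N"
  using alg1D[of "N - 1" e t P] by simp
lemma alg2: "(N::real) \<noteq> 0 \<Longrightarrow> N - 1 \<noteq> 0 \<Longrightarrow>
   P - e * (- t / (N-1)) / N + e * t / N = (e * t - (- (N-1)) * P) / (N - 1)"
  using alg2D[of "N - 1" P e t] by simp

lemma pd_neg: "smooth f \<Longrightarrow> pd i (\<lambda>x. - f x) = (\<lambda>x. - pd i f x)"
  using pd_cmult[of f i "-1"] by simp

lemma wave_add: "smooth f \<Longrightarrow> smooth g \<Longrightarrow> wave (\<lambda>x. f x + g x) = (\<lambda>x. wave f x + wave g x)"
  by (simp add: wave_eq pd_add distrib_left sum.distrib)

context
  fixes G :: "((real,'n::{finite,wellorder}) vec \<Rightarrow> real) \<Rightarrow> ((real,'n) vec \<Rightarrow> real)"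
  assumes G: "is_retarded_green G" and n2: "CARD('n) \<ge> 2"
begin

lemmas Gsimps'[simp] = G_smooth[OF G] G_pc[OF G] G_wave1[OF G] G_zero[OF G]

lemma Dpos: "real CARD('n) - 1 > 0" using n2 by simp

lemma PS0_comp: "PS0 G \<phi> a b = (\<lambda>x. (eta a b * \<phi> x - pd a (pd b (G \<phi>)) x) / (real CARD('n) - 1))"
  unfolding PS0_def[OF G n2] by simp

lemma PS0_Gamma:
  assumes s: "smooth \<phi>" and p: "past_compact \<phi>"
  shows "PS0 G \<phi> \<in> Gamma_pc"
proof -
  define D where "D = real CARD('n) - 1"
  have sm: "smooth_t (PS0 G \<phi>)" unfolding smooth_t_def PS0_comp using s p by simp
  have pc: "pc_t (PS0 G \<phi>)" unfolding pc_t_def PS0_comp using s p by simp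
  have sy: "sym_t (PS0 G \<phi>)" unfolding sym_t_def PS0_comp
    using schwarz[OF G_smooth[OF G s p]] eta_sym by metis
  have dv: "divfree_t (PS0 G \<phi>)" unfolding divfree_t_def
  proof (intro allI)
    fix b x
    have e1: "eta a a * pd a (PS0 G \<phi> a b) x =
       (eta a b * (eta a a * pd a \<phi> x) - eta a a * pd a (pd a (pd b (G \<phi>))) x) / D" for a
      unfolding PS0_comp D_def using s p by (simp add: pd_divide pd_diff pd_cmult) (simp add: algebra_simps)
    have "(\<Sum>a\<in>UNIV. pdu a (PS0 G \<phi> a b) x) = (\<Sum>a\<in>UNIV. eta a a * pd a (PS0 G \<phi> a b) x)"
      by (simp add: pdu_eq)
    also have "\<dots> = ((\<Sum>a\<in>UNIV. eta a b * (eta a a * pd a \<phi> x)) - (\<Sum>a\<in>UNIV. eta a a * pd a (pd a (pd b (G \<phi>))) x)) / D"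
      unfolding e1 by (simp add: sum_divide_distrib[symmetric] sum_subtractf)
    also have "(\<Sum>a\<in>UNIV. eta a b * (eta a a * pd a \<phi> x)) = pd b \<phi> x"
      using eta_sum_r[of b "\<lambda>a. eta a a * pd a \<phi> x"] by simp
    also have "(\<Sum>a\<in>UNIV. eta a a * pd a (pd a (pd b (G \<phi>))) x) = pd b \<phi> x"
      using wave_pd[OF G_smooth[OF G s p], of b] s p by (metis G_wave1[OF G s p])
    finally show "(\<Sum>a\<in>UNIV. pdu a (PS0 G \<phi> a b) x) = 0" by simp
  qed
  show ?thesis using sm pc sy dv unfolding Gamma_pc_def by simp
qed

lemma PS0_trace:
  assumes s: "smooth \<phi>" and p: "past_compact \<phi>"
  shows "trace_t (PS0 G \<phi>) = \<phi>"
proof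
  fix x
  define D where "D = real CARD('n) - 1"
  have D: "D > 0" using Dpos D_def by simp
  have e1: "eta a a * PS0 G \<phi> a a x = (\<phi> x - eta a a * pd a (pd a (G \<phi>)) x) / D" for a
    unfolding PS0_comp D_def by (simp add: algebra_simps)
  have "trace_t (PS0 G \<phi>) x = (\<Sum>a\<in>UNIV. eta a a * PS0 G \<phi> a a x)" by (simp add: trace_eq)
  also have "\<dots> = (real CARD('n) * \<phi> x - wave (G \<phi>) x) / D"
    unfolding e1 by (simp add: sum_divide_distrib[symmetric] sum_subtractf wave_eq)
  also have "\<dots> = \<phi> x" using s p D unfolding D_def by (simp add: field_simps)
  finally show "trace_t (PS0 G \<phi>) x = \<phi> x" .
qed


lemma decomp_exists:
  assumes h: "h \<in> Gamma_pc"
  shows "is_decomp h (PS0 G (trace_t h)) (\<lambda>a b x. 0) (\<lambda>a b x. h a b x - PS0 G (trace_t h) a b x)"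
proof -
  define T where "T = trace_t h"
  define N where "N = real CARD('n)"
  define D where "D = N - 1"
  have D: "D > 0" "D \<noteq> 0" using Dpos D_def N_def by auto
  have N: "N \<noteq> 0" using D D_def by auto
  have sT: "smooth T" and pT: "past_compact T" unfolding T_def using h by auto
  define c where "c = - 1 / D"
  define u where "u = (\<lambda>x. c * G T x)"
  have su: "smooth u" "past_compact u" unfolding u_def using sT pT by auto
  have wu: "wave u = (\<lambda>x. c * T x)" unfolding u_def using sT pT by (simp add: wave_cmult)
  have pu: "pd a (pd b u) = (\<lambda>x. c * pd a (pd b (G T)) x)" for a b
    unfolding u_def using sT pT by (simp add: pd_cmult)
  have kS: "PS0 G T = (\<lambda>a b x. pd a (pd b u) x - eta a b * wave u x / N + eta a b * T x / N)"
  proof (intro ext)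
    fix a b x
    show "PS0 G T a b x = pd a (pd b u) x - eta a b * wave u x / N + eta a b * T x / N"
      unfolding PS0_comp pu wu c_def using D N alg1 unfolding D_def N_def
      by simp
  qed
  have P1: "\<exists>u. smooth u \<and> past_compact u \<and>
        PS0 G T = (\<lambda>a b x. pd a (pd b u) x - eta a b * wave u x / real CARD('n)
                       + eta a b * trace_t h x / real CARD('n))"
    using su kS unfolding N_def T_def by blast
  have P2: "\<exists>w. smooth_v w \<and> pc_v w \<and> divfree_v w \<and>
        (\<lambda>a b x. 0) = (\<lambda>a b x. pd a (w b) x + pd b (w a) x)"
    by (rule exI[of _ "\<lambda>a x. 0"]) (simp add: smooth_v_def pc_v_def divfree_v_def pdu_eq)
  have PG: "PS0 G T \<in> Gamma_pc" using PS0_Gamma sT pT by blast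
  have KG: "(\<lambda>a b x. h a b x - PS0 G T a b x) \<in> Gamma_pc" using Gamma_diff[OF h PG] .
  have tr: "trace_t (\<lambda>a b x. h a b x - PS0 G T a b x) x = 0" for x
    using PS0_trace[OF sT pT] T_def by (simp add: trace_diff)
  show ?thesis unfolding is_decomp_def
    using P1 P2 KG tr unfolding T_def Gamma_pc_def by auto
qed

lemma decomp_unique:
  assumes h: "h \<in> Gamma_pc" and dec: "is_decomp h kS kV kTT"
  shows "kS = PS0 G (trace_t h) \<and> kTT = (\<lambda>a b x. h a b x - PS0 G (trace_t h) a b x)"
proof -
  define T where "T = trace_t h"
  define N where "N = real CARD('n)"
  define D where "D = N - 1"
  have D: "D > 0" "D \<noteq> 0" using Dpos D_def N_def by auto
  have N: "N \<noteq> 0" using D D_def by auto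
  have sT: "smooth T" and pT: "past_compact T" unfolding T_def using h by auto
  obtain u where su: "smooth u" "past_compact u" and
    kSd: "kS = (\<lambda>a b x. pd a (pd b u) x - eta a b * wave u x / N + eta a b * T x / N)"
    using dec unfolding is_decomp_def T_def N_def by blast
  obtain w where sw: "\<And>a. smooth (w a)" and pw: "\<And>a. past_compact (w a)"
    and dw: "\<And>x. (\<Sum>a\<in>UNIV. eta a a * pd a (w a) x) = 0"
    and kVd: "kV = (\<lambda>a b x. pd a (w b) x + pd b (w a) x)"
    using dec unfolding is_decomp_def smooth_v_def pc_v_def divfree_v_def pdu_eq by blast
  have sTT: "\<And>a b. smooth (kTT a b)" and dTT: "\<And>b x. (\<Sum>a\<in>UNIV. eta a a * pd a (kTT a b) x) = 0"
    using dec unfolding is_decomp_def smooth_t_def divfree_t_def pdu_eq by auto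
  have hs: "\<And>a b. h a b = (\<lambda>x. kS a b x + kV a b x + kTT a b x)"
    using dec unfolding is_decomp_def by auto
  have sS: "\<And>a b. smooth (kS a b)" unfolding kSd using su sT by simp
  have sV: "\<And>a b. smooth (kV a b)" unfolding kVd using sw by simp
  have dwf: "(\<lambda>x. \<Sum>a\<in>UNIV. eta a a * pd a (w a) x) = (\<lambda>x. 0)" using dw by blast
  have swu: "smooth (wave u)" using su by simp
  have E: "pd b (wave u) x - pd b (wave u) x / N + pd b T x / N + wave (w b) x = 0" for b x
  proof -
    have pS: "eta a a * pd a (kS a b) x = eta a a * pd a (pd a (pd b u)) x
        - eta a b * (eta a a * pd a (wave u) x) / N + eta a b * (eta a a * pd a T x) / N" for a
      unfolding kSd using su sT swu by (simp add: pd_add pd_diff pd_divide pd_cmult) (simp add: algebra_simps)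
    have sumS: "(\<Sum>a\<in>UNIV. eta a a * pd a (kS a b) x) = pd b (wave u) x - pd b (wave u) x / N + pd b T x / N"
    proof -
      have "(\<Sum>a\<in>UNIV. eta a a * pd a (kS a b) x) =
        (\<Sum>a\<in>UNIV. eta a a * pd a (pd a (pd b u)) x)
        - (\<Sum>a\<in>UNIV. eta a b * (eta a a * pd a (wave u) x)) / N
        + (\<Sum>a\<in>UNIV. eta a b * (eta a a * pd a T x)) / N"
        unfolding pS by (simp add: sum.distrib sum_subtractf sum_divide_distrib eta_sum_rd)
      also have "\<dots> = pd b (wave u) x - pd b (wave u) x / N + pd b T x / N"
      proof -
        have A: "(\<Sum>a\<in>UNIV. eta a a * pd a (pd a (pd b u)) x) = pd b (wave u) x"
          using wave_pd[OF su(1), of b] by simp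
        have B: "(\<Sum>a\<in>UNIV. eta a b * (eta a a * pd a (wave u) x)) = pd b (wave u) x"
          using eta_sum_r[of b "\<lambda>a. eta a a * pd a (wave u) x"] by (simp add: mult.assoc[symmetric])
        have C: "(\<Sum>a\<in>UNIV. eta a b * (eta a a * pd a T x)) = pd b T x"
          using eta_sum_r[of b "\<lambda>a. eta a a * pd a T x"] by (simp add: mult.assoc[symmetric])
        show ?thesis unfolding A B C ..
      qed
      finally show ?thesis .
    qed
    have pV: "eta a a * pd a (kV a b) x = eta a a * pd a (pd a (w b)) x + eta a a * pd b (pd a (w a)) x" for a
      unfolding kVd using sw schwarz[OF sw[of a], of a b] by (simp add: pd_add distrib_left)
    have sumV: "(\<Sum>a\<in>UNIV. eta a a * pd a (kV a b) x) = wave (w b) x"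
    proof -
      have "(\<Sum>a\<in>UNIV. eta a a * pd b (pd a (w a)) x) = pd b (\<lambda>x. \<Sum>a\<in>UNIV. eta a a * pd a (w a) x) x"
        using sw by (simp add: pd_sum pd_cmult)
      also have "\<dots> = 0" unfolding dwf by simp
      finally have z: "(\<Sum>a\<in>UNIV. eta a a * pd b (pd a (w a)) x) = 0" .
      show ?thesis unfolding pV sum.distrib z by (simp add: wave_eq)
    qed
    have "0 = (\<Sum>a\<in>UNIV. eta a a * pd a (h a b) x)" using Gamma_div1[OF h] by simp
    also have "\<dots> = (\<Sum>a\<in>UNIV. eta a a * pd a (kS a b) x) + (\<Sum>a\<in>UNIV. eta a a * pd a (kV a b) x)
         + (\<Sum>a\<in>UNIV. eta a a * pd a (kTT a b) x)"
      unfolding hs using sS sV sTT by (simp add: pd_add distrib_left sum.distrib)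
    finally show ?thesis unfolding sumS sumV dTT by simp
  qed
  define Phi where "Phi = (\<lambda>x. D * wave u x + T x)"
  have sPhi: "smooth Phi" "past_compact Phi" unfolding Phi_def using su sT pT by auto
  have pPhi: "pd b Phi = (\<lambda>x. - N * wave (w b) x)" for b
  proof
    fix x
    have "pd b Phi x = D * pd b (wave u) x + pd b T x" unfolding Phi_def using su sT by (simp add: pd_add pd_cmult)
    then show "pd b Phi x = - N * wave (w b) x" using E[of b x] N unfolding D_def by (simp add: field_simps)
  qed
  have "wave Phi = (\<lambda>x. \<Sum>b\<in>UNIV. eta b b * pd b (pd b Phi) x)" by (simp add: wave_eq)
  also have "\<dots> = (\<lambda>x. - N * wave (\<lambda>x. \<Sum>b\<in>UNIV. eta b b * pd b (w b) x) x)"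
  proof -
    have "pd b (pd b Phi) = (\<lambda>x. - N * wave (pd b (w b)) x)" for b
      unfolding pPhi using sw by (simp add: pd_neg pd_cmult wave_pd')
    then show ?thesis using sw by (simp add: wave_sum wave_cmult sum_distrib_left algebra_simps)
  qed
  also have "\<dots> = (\<lambda>x. 0)" unfolding dwf by simp
  finally have "Phi = (\<lambda>x. 0)" using wave_unique[OF G sPhi] by blast
  then have Phi0: "\<And>x. D * wave u x + T x = 0" unfolding Phi_def by metis
  have ww: "wave (w b) = (\<lambda>x. 0)" for b
    using pPhi[of b] \<open>Phi = (\<lambda>x. 0)\<close> N by (auto simp: fun_eq_iff)
  have w0: "w b = (\<lambda>x. 0)" for b using wave_unique[OF G sw pw ww] .
  have kV0: "kV = (\<lambda>a b x. 0)" unfolding kVd w0 by simp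
  have GT: "G T = (\<lambda>x. (- D) * u x)"
  proof (rule G_eqI[OF G])
    show "smooth (\<lambda>x. (- D) * u x)" using smooth_cmult[OF su(1)] .
    show "past_compact (\<lambda>x. (- D) * u x)" using pc_cmult[OF su(2)] .
    show "wave (\<lambda>x. (- D) * u x) = T"
      unfolding wave_cmult[OF su(1)] using Phi0 by (simp add: fun_eq_iff add_eq_0_iff)
  qed
  have kSP: "kS = PS0 G T"
  proof (intro ext)
    fix a b x
    have wu: "wave u x = - T x / D" using Phi0[of x] D by (simp add: field_simps)
    have 1: "kS a b x = pd a (pd b u) x - eta a b * (- T x / D) / N + eta a b * T x / N"
      using wu unfolding kSd by simp
    have pp: "pd a (pd b (\<lambda>x. (- D) * u x)) x = (- D) * pd a (pd b u) x"
      by (simp only: pd_cmult[OF su(1)] pd_cmult[OF smooth_pd[OF su(1)]])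
    have 2: "PS0 G T a b x = (eta a b * T x - (- D) * pd a (pd b u) x) / D"
      unfolding PS0_comp GT pp by (simp add: D_def N_def)
    show "kS a b x = PS0 G T a b x"
      unfolding 1 2 D_def using alg2[of N "pd a (pd b u) x" "eta a b" "T x"] D N unfolding D_def by simp
  qed
  show ?thesis using kSP kV0 hs unfolding T_def by (auto simp: fun_eq_iff)
qed

end



theorem proposition2p6:
  fixes G :: "((real,'n::{finite,wellorder}) vec \<Rightarrow> real) \<Rightarrow> ((real,'n) vec \<Rightarrow> real)"
  assumes "CARD('n) \<ge> 2"
    and "is_retarded_green G"
  shows "(\<forall>h\<in>Gamma_pc. P_S G h = scalar_part h \<and> P_TT G h = TT_part h)
       \<and> (\<forall>h\<in>Gamma_pc. (\<lambda>a b x. P_S G h a b x + P_TT G h a b x) = h)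
       \<and> (\<forall>h\<in>Gamma_pc. P_S G (P_TT G h) = (\<lambda>a b x. 0) \<and> P_TT G (P_S G h) = (\<lambda>a b x. 0))"
proof -
  note G = assms(2) and n2 = assms(1)
  have PS: "P_S G h = PS0 G (trace_t h)" and PT: "P_TT G h = (\<lambda>a b x. h a b x - PS0 G (trace_t h) a b x)"
    if "h \<in> Gamma_pc" for h
    using P_S_eq[OF G n2 that] P_TT_eq[OF G n2 that] by auto
  have PG: "PS0 G (trace_t h) \<in> Gamma_pc" and PTr: "trace_t (PS0 G (trace_t h)) = trace_t h"
    if "h \<in> Gamma_pc" for h
    using PS0_Gamma[OF G n2] PS0_trace[OF G n2] that by auto
  have PS00: "PS0 G (\<lambda>x. 0) = (\<lambda>a b x. 0)"
    by (intro ext) (simp add: PS0_comp[OF G n2] G_zero[OF G])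
  have part1: "P_S G h = scalar_part h \<and> P_TT G h = TT_part h" if h: "h \<in> Gamma_pc" for h
  proof -
    note ex = decomp_exists[OF G n2 h]
    note un = decomp_unique[OF G n2 h]
    have "scalar_part h = PS0 G (trace_t h)"
      unfolding scalar_part_def
      by (rule the_equality) (use ex un in blast)+
    moreover have "TT_part h = (\<lambda>a b x. h a b x - PS0 G (trace_t h) a b x)"
      unfolding TT_part_def
      by (rule the_equality) (use ex un in blast)+
    ultimately show ?thesis using PS[OF h] PT[OF h] by simp
  qed
  have part2: "(\<lambda>a b x. P_S G h a b x + P_TT G h a b x) = h" if h: "h \<in> Gamma_pc" for h
    using PS[OF h] PT[OF h] by simp
  have part3: "P_S G (P_TT G h) = (\<lambda>a b x. 0) \<and> P_TT G (P_S G h) = (\<lambda>a b x. 0)"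
    if h: "h \<in> Gamma_pc" for h
  proof
    define m where "m = (\<lambda>a b x. h a b x - PS0 G (trace_t h) a b x)"
    have mG: "m \<in> Gamma_pc" unfolding m_def using Gamma_diff[OF h PG[OF h]] .
    have tm: "trace_t m = (\<lambda>x. 0)" unfolding m_def trace_diff PTr[OF h] by simp
    show "P_S G (P_TT G h) = (\<lambda>a b x. 0)"
      unfolding PT[OF h] m_def[symmetric] PS[OF mG] tm PS00 ..
    show "P_TT G (P_S G h) = (\<lambda>a b x. 0)"
      unfolding PS[OF h] PT[OF PG[OF h]] PTr[OF h] by simp
  qed
  show ?thesis using part1 part2 part3 by blast
qed


end
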